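(* Let $T=(\{T_g\}_{g\in G},\{\gamma_{g,h}\}_{g,h\in G},u)$ be an action of a group $G$ on a semigroupal category $\mathcal{C}$, let $\mathcal{I}$ be an ideal of $\mathcal{C}$, and for each $g\in G$ put $\mathcal{C}_g=\mathcal{I}\cap\overline{T_g(\mathcal{I})}$. Then (1) $\mathcal{C}_e=\mathcal{I}$; (2) $T_g(\mathcal{C}_{g^{-1}}\cap\mathcal{C}_h)\subseteq\mathcal{C}_g\cap\mathcal{C}_{gh}$ for all $g,h\in G$; (3) $\overline{T_g(\mathcal{C}_{g^{-1}}\cap\mathcal{C}_h)}=\mathcal{C}_g\cap\mathcal{C}_{gh}$ for all $g,h\in G$.
   Context: A semigroupal category is a (strict) category with a tensor product functor and associator satisfying the pentagon axiom. An action of a group $G$ (unit $e$) on $\mathcal{C}$ consists of semigroupal auto-equivalences $T_g$ of $\mathcal{C}$, natural isomorphisms of semigroupal functors $\gamma_{g,h}\colon T_gT_h\Rightarrow T_{gh}$ and $u\colon\mathrm{Id}_{\mathcal{C}}\Rightarrow T_e$, with $(\gamma_{gh,k})_X\circ(\gamma_{g,h})_{T_k(X)}=(\gamma_{g,hk})_X\circ T_g((\gamma_{h,k})_X)$, and with $u_{T_g(X)}$, $(\gamma_{e,g})_X$ mutually inverse and $T_g(u_X)$, $(\gamma_{g,e})_X$ mutually inverse. For a subcategory $\mathcal{D}$, $\overline{\mathcal{D}}$ denotes the smallest subcategory of $\mathcal{C}$ containing $\mathcal{D}$ and closed under isomorphisms (with each of its objects $X$ and each isomorphism $\varphi\colon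 X\to X'$ in $\mathcal{C}$, it contains $X'$ and $\varphi$). An ideal of $\mathcal{C}$ is a subcategory closed under isomorphisms such that $X\otimes Y$ and $Y\otimes X$ are objects of it whenever $X$ is an object of it and $Y$ is any object of $\mathcal{C}$. Intersections of subcategories are taken on objects and morphisms; $T_g(\mathcal{D})$ is the image subcategory. *)

theory Defs
  imports "HOL-Algebra.Group"
begin

text \<open>A (strict) category with a tensor product functor and associator.
  Composition convention: c_comp C g f is g after f (defined when
  c_cod C f = c_dom C g).\<close>

record ('o, 'm) scat =
  c_obj  :: "'o set"
  c_mor  :: "'m set"
  c_dom  :: "'m \<Rightarrow> 'o"
  c_cod  :: "'m \<Rightarrow> 'o"
  c_id   :: "'o \<Rightarrow> 'm"
  c_comp :: "'m \<Rightarrow> 'm \<Rightarrow> 'm"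
  c_tob  :: "'o \<Rightarrow> 'o \<Rightarrow> 'o"
  c_tmor :: "'m \<Rightarrow> 'm \<Rightarrow> 'm"
  c_assoc :: "'o \<Rightarrow> 'o \<Rightarrow> 'o \<Rightarrow> 'm"

definition is_category :: "('o, 'm, 'z) scat_scheme \<Rightarrow> bool" where
  "is_category C \<longleftrightarrow>
     (\<forall>f \<in> c_mor C. c_dom C f \<in> c_obj C \<and> c_cod C f \<in> c_obj C) \<and>
     (\<forall>X \<in> c_obj C. c_id C X \<in> c_mor C \<and> c_dom C (c_id C X) = X \<and> c_cod C (c_id C X) = X) \<and>
     (\<forall>f \<in> c_mor C. \<forall>g \<in> c_mor C. c_cod C f = c_dom C g \<longrightarrow>
        c_comp C g f \<in> c_mor C \<and> c_dom C (c_comp C g f) = c_dom C f \<and>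
        c_cod C (c_comp C g f) = c_cod C g) \<and>
     (\<forall>f \<in> c_mor C. c_comp C f (c_id C (c_dom C f)) = f \<and> c_comp C (c_id C (c_cod C f)) f = f) \<and>
     (\<forall>f \<in> c_mor C. \<forall>g \<in> c_mor C. \<forall>h \<in> c_mor C.
        c_cod C f = c_dom C g \<longrightarrow> c_cod C g = c_dom C h \<longrightarrow>
        c_comp C h (c_comp C g f) = c_comp C (c_comp C h g) f)"

definition mutually_inverse :: "('o, 'm, 'z) scat_scheme \<Rightarrow> 'm \<Rightarrow> 'm \<Rightarrow> bool" where
  "mutually_inverse C phi psi \<longleftrightarrow>
     phi \<in> c_mor C \<and> psi \<in> c_mor C \<and>
     c_dom C psi = c_cod C phi \<and> c_cod C psi = c_dom C phi \<and>
     c_comp C psi phi = c_id C (c_dom C phi) \<and> c_comp C phi psi = c_id C (c_cod C phi)"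

definition is_iso :: "('o, 'm, 'z) scat_scheme \<Rightarrow> 'm \<Rightarrow> bool" where
  "is_iso C phi \<longleftrightarrow> (\<exists>psi. mutually_inverse C phi psi)"

definition tensor_functor :: "('o, 'm, 'z) scat_scheme \<Rightarrow> bool" where
  "tensor_functor C \<longleftrightarrow>
     (\<forall>X \<in> c_obj C. \<forall>Y \<in> c_obj C. c_tob C X Y \<in> c_obj C \<and>
        c_tmor C (c_id C X) (c_id C Y) = c_id C (c_tob C X Y)) \<and>
     (\<forall>f \<in> c_mor C. \<forall>g \<in> c_mor C. c_tmor C f g \<in> c_mor C \<and>
        c_dom C (c_tmor C f g) = c_tob C (c_dom C f) (c_dom C g) \<and>
        c_cod C (c_tmor C f g) = c_tob C (c_cod C f) (c_cod C g)) \<and>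
     (\<forall>f \<in> c_mor C. \<forall>f' \<in> c_mor C. \<forall>g \<in> c_mor C. \<forall>g' \<in> c_mor C.
        c_cod C f = c_dom C f' \<longrightarrow> c_cod C g = c_dom C g' \<longrightarrow>
        c_tmor C (c_comp C f' f) (c_comp C g' g) = c_comp C (c_tmor C f' g') (c_tmor C f g))"

definition associator_ok :: "('o, 'm, 'z) scat_scheme \<Rightarrow> bool" where
  "associator_ok C \<longleftrightarrow>
     (\<forall>X \<in> c_obj C. \<forall>Y \<in> c_obj C. \<forall>Z \<in> c_obj C.
        c_assoc C X Y Z \<in> c_mor C \<and> is_iso C (c_assoc C X Y Z) \<and>
        c_dom C (c_assoc C X Y Z) = c_tob C (c_tob C X Y) Z \<and>
        c_cod C (c_assoc C X Y Z) = c_tob C X (c_tob C Y Z)) \<and>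
     (\<forall>f \<in> c_mor C. \<forall>g \<in> c_mor C. \<forall>h \<in> c_mor C.
        c_comp C (c_assoc C (c_cod C f) (c_cod C g) (c_cod C h)) (c_tmor C (c_tmor C f g) h) =
        c_comp C (c_tmor C f (c_tmor C g h)) (c_assoc C (c_dom C f) (c_dom C g) (c_dom C h))) \<and>
     (\<forall>W \<in> c_obj C. \<forall>X \<in> c_obj C. \<forall>Y \<in> c_obj C. \<forall>Z \<in> c_obj C.
        c_comp C (c_assoc C W X (c_tob C Y Z)) (c_assoc C (c_tob C W X) Y Z) =
        c_comp C (c_tmor C (c_id C W) (c_assoc C X Y Z))
          (c_comp C (c_assoc C W (c_tob C X Y) Z) (c_tmor C (c_assoc C W X Y) (c_id C Z))))"

definition semigroupal_category :: "('o, 'm, 'z) scat_scheme \<Rightarrow> bool" where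
  "semigroupal_category C \<longleftrightarrow> is_category C \<and> tensor_functor C \<and> associator_ok C"

text \<open>A semigroupal endofunctor is given by its object map Fo, morphism map Fm and
  structure isomorphisms J_{X,Y} : F X (x) F Y -> F (X (x) Y).\<close>

definition is_endofunctor :: "('o, 'm, 'z) scat_scheme \<Rightarrow> ('o \<Rightarrow> 'o) \<Rightarrow> ('m \<Rightarrow> 'm) \<Rightarrow> bool" where
  "is_endofunctor C Fo Fm \<longleftrightarrow>
     (\<forall>X \<in> c_obj C. Fo X \<in> c_obj C \<and> Fm (c_id C X) = c_id C (Fo X)) \<and>
     (\<forall>f \<in> c_mor C. Fm f \<in> c_mor C \<and> c_dom C (Fm f) = Fo (c_dom C f) \<and>
        c_cod C (Fm f) = Fo (c_cod C f)) \<and>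
     (\<forall>f \<in> c_mor C. \<forall>g \<in> c_mor C. c_cod C f = c_dom C g \<longrightarrow>
        Fm (c_comp C g f) = c_comp C (Fm g) (Fm f))"

definition semigroupal_functor ::
  "('o, 'm, 'z) scat_scheme \<Rightarrow> ('o \<Rightarrow> 'o) \<Rightarrow> ('m \<Rightarrow> 'm) \<Rightarrow> ('o \<Rightarrow> 'o \<Rightarrow> 'm) \<Rightarrow> bool" where
  "semigroupal_functor C Fo Fm J \<longleftrightarrow>
     is_endofunctor C Fo Fm \<and>
     (\<forall>X \<in> c_obj C. \<forall>Y \<in> c_obj C. is_iso C (J X Y) \<and>
        c_dom C (J X Y) = c_tob C (Fo X) (Fo Y) \<and> c_cod C (J X Y) = Fo (c_tob C X Y)) \<and>
     (\<forall>f \<in> c_mor C. \<forall>g \<in> c_mor C.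
        c_comp C (J (c_cod C f) (c_cod C g)) (c_tmor C (Fm f) (Fm g)) =
        c_comp C (Fm (c_tmor C f g)) (J (c_dom C f) (c_dom C g))) \<and>
     (\<forall>X \<in> c_obj C. \<forall>Y \<in> c_obj C. \<forall>Z \<in> c_obj C.
        c_comp C (Fm (c_assoc C X Y Z))
          (c_comp C (J (c_tob C X Y) Z) (c_tmor C (J X Y) (c_id C (Fo Z)))) =
        c_comp C (J X (c_tob C Y Z))
          (c_comp C (c_tmor C (c_id C (Fo X)) (J Y Z)) (c_assoc C (Fo X) (Fo Y) (Fo Z))))"

definition is_equivalence :: "('o, 'm, 'z) scat_scheme \<Rightarrow> ('o \<Rightarrow> 'o) \<Rightarrow> ('m \<Rightarrow> 'm) \<Rightarrow> bool" where
  "is_equivalence C Fo Fm \<longleftrightarrow>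
     is_endofunctor C Fo Fm \<and>
     (\<forall>X \<in> c_obj C. \<forall>Y \<in> c_obj C.
        bij_betw Fm {f \<in> c_mor C. c_dom C f = X \<and> c_cod C f = Y}
                    {f \<in> c_mor C. c_dom C f = Fo X \<and> c_cod C f = Fo Y}) \<and>
     (\<forall>Y \<in> c_obj C. \<exists>X \<in> c_obj C. \<exists>phi. is_iso C phi \<and> c_dom C phi = Fo X \<and> c_cod C phi = Y)"

definition semigroupal_autoequivalence ::
  "('o, 'm, 'z) scat_scheme \<Rightarrow> ('o \<Rightarrow> 'o) \<Rightarrow> ('m \<Rightarrow> 'm) \<Rightarrow> ('o \<Rightarrow> 'o \<Rightarrow> 'm) \<Rightarrow> bool" where
  "semigroupal_autoequivalence C Fo Fm J \<longleftrightarrow>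
     semigroupal_functor C Fo Fm J \<and> is_equivalence C Fo Fm"

definition semigroupal_nat_iso ::
  "('o, 'm, 'z) scat_scheme \<Rightarrow> ('o \<Rightarrow> 'o) \<Rightarrow> ('m \<Rightarrow> 'm) \<Rightarrow> ('o \<Rightarrow> 'o \<Rightarrow> 'm)
     \<Rightarrow> ('o \<Rightarrow> 'o) \<Rightarrow> ('m \<Rightarrow> 'm) \<Rightarrow> ('o \<Rightarrow> 'o \<Rightarrow> 'm) \<Rightarrow> ('o \<Rightarrow> 'm) \<Rightarrow> bool" where
  "semigroupal_nat_iso C Fo Fm JF Go Gm JG theta \<longleftrightarrow>
     (\<forall>X \<in> c_obj C. is_iso C (theta X) \<and> c_dom C (theta X) = Fo X \<and> c_cod C (theta X) = Go X) \<and>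
     (\<forall>f \<in> c_mor C. c_comp C (theta (c_cod C f)) (Fm f) = c_comp C (Gm f) (theta (c_dom C f))) \<and>
     (\<forall>X \<in> c_obj C. \<forall>Y \<in> c_obj C.
        c_comp C (theta (c_tob C X Y)) (JF X Y) = c_comp C (JG X Y) (c_tmor C (theta X) (theta Y)))"

definition comp_J :: "('o, 'm, 'z) scat_scheme \<Rightarrow> ('o \<Rightarrow> 'o) \<Rightarrow> ('o \<Rightarrow> 'o \<Rightarrow> 'm)
     \<Rightarrow> ('m \<Rightarrow> 'm) \<Rightarrow> ('o \<Rightarrow> 'o \<Rightarrow> 'm) \<Rightarrow> 'o \<Rightarrow> 'o \<Rightarrow> 'm" where
  "comp_J C Fo JF Gm JG X Y = c_comp C (Gm (JF X Y)) (JG (Fo X) (Fo Y))"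

definition id_J :: "('o, 'm, 'z) scat_scheme \<Rightarrow> 'o \<Rightarrow> 'o \<Rightarrow> 'm" where
  "id_J C X Y = c_id C (c_tob C X Y)"

definition group_action ::
  "('g, 'b) monoid_scheme \<Rightarrow> ('o, 'm, 'z) scat_scheme \<Rightarrow>
   ('g \<Rightarrow> 'o \<Rightarrow> 'o) \<Rightarrow> ('g \<Rightarrow> 'm \<Rightarrow> 'm) \<Rightarrow> ('g \<Rightarrow> 'o \<Rightarrow> 'o \<Rightarrow> 'm) \<Rightarrow>
   ('g \<Rightarrow> 'g \<Rightarrow> 'o \<Rightarrow> 'm) \<Rightarrow> ('o \<Rightarrow> 'm) \<Rightarrow> bool" where
  "group_action G C To Tm TJ gam u \<longleftrightarrow>
     (\<forall>g \<in> carrier G. semigroupal_autoequivalence C (To g) (Tm g) (TJ g)) \<and>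
     (\<forall>g \<in> carrier G. \<forall>h \<in> carrier G.
        semigroupal_nat_iso C (To g \<circ> To h) (Tm g \<circ> Tm h) (comp_J C (To h) (TJ h) (Tm g) (TJ g))
          (To (g \<otimes>\<^bsub>G\<^esub> h)) (Tm (g \<otimes>\<^bsub>G\<^esub> h)) (TJ (g \<otimes>\<^bsub>G\<^esub> h)) (gam g h)) \<and>
     semigroupal_nat_iso C id id (id_J C)
        (To \<one>\<^bsub>G\<^esub>) (Tm \<one>\<^bsub>G\<^esub>) (TJ \<one>\<^bsub>G\<^esub>) u \<and>
     (\<forall>g \<in> carrier G. \<forall>h \<in> carrier G. \<forall>k \<in> carrier G. \<forall>X \<in> c_obj C.
        c_comp C (gam (g \<otimes>\<^bsub>G\<^esub> h) k X) (gam g h (To k X)) =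
        c_comp C (gam g (h \<otimes>\<^bsub>G\<^esub> k) X) (Tm g (gam h k X))) \<and>
     (\<forall>g \<in> carrier G. \<forall>X \<in> c_obj C.
        mutually_inverse C (u (To g X)) (gam \<one>\<^bsub>G\<^esub> g X) \<and>
        mutually_inverse C (Tm g (u X)) (gam g \<one>\<^bsub>G\<^esub> X))"

type_synonym ('o, 'm) subcat = "'o set \<times> 'm set"

definition is_subcategory :: "('o, 'm, 'z) scat_scheme \<Rightarrow> ('o, 'm) subcat \<Rightarrow> bool" where
  "is_subcategory C D \<longleftrightarrow>
     fst D \<subseteq> c_obj C \<and> snd D \<subseteq> c_mor C \<and>
     (\<forall>f \<in> snd D. c_dom C f \<in> fst D \<and> c_cod C f \<in> fst D) \<and>
     (\<forall>X \<in> fst D. c_id C X \<in> snd D) \<and>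
     (\<forall>f \<in> snd D. \<forall>g \<in> snd D. c_cod C f = c_dom C g \<longrightarrow> c_comp C g f \<in> snd D)"

definition iso_closed :: "('o, 'm, 'z) scat_scheme \<Rightarrow> ('o, 'm) subcat \<Rightarrow> bool" where
  "iso_closed C D \<longleftrightarrow>
     (\<forall>X \<in> fst D. \<forall>phi. is_iso C phi \<and> c_dom C phi = X \<longrightarrow>
        c_cod C phi \<in> fst D \<and> phi \<in> snd D)"

definition sub_le :: "('o, 'm) subcat \<Rightarrow> ('o, 'm) subcat \<Rightarrow> bool" where
  "sub_le D E \<longleftrightarrow> fst D \<subseteq> fst E \<and> snd D \<subseteq> snd E"

definition sub_inter :: "('o, 'm) subcat \<Rightarrow> ('o, 'm) subcat \<Rightarrow> ('o, 'm) subcat" where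
  "sub_inter D E = (fst D \<inter> fst E, snd D \<inter> snd E)"

definition iso_closure :: "('o, 'm, 'z) scat_scheme \<Rightarrow> ('o, 'm) subcat \<Rightarrow> ('o, 'm) subcat" where
  "iso_closure C D =
     (\<Inter>{fst S | S. is_subcategory C S \<and> iso_closed C S \<and> sub_le D S},
      \<Inter>{snd S | S. is_subcategory C S \<and> iso_closed C S \<and> sub_le D S})"

definition sub_image :: "('o \<Rightarrow> 'o) \<Rightarrow> ('m \<Rightarrow> 'm) \<Rightarrow> ('o, 'm) subcat \<Rightarrow> ('o, 'm) subcat" where
  "sub_image Fo Fm D = (Fo ` fst D, Fm ` snd D)"

definition is_ideal :: "('o, 'm, 'z) scat_scheme \<Rightarrow> ('o, 'm) subcat \<Rightarrow> bool" where
  "is_ideal C I \<longleftrightarrow> is_subcategory C I \<and> iso_closed C I \<and>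
     (\<forall>X \<in> fst I. \<forall>Y \<in> c_obj C. c_tob C X Y \<in> fst I \<and> c_tob C Y X \<in> fst I)"

definition Csub :: "('o, 'm, 'z) scat_scheme \<Rightarrow> ('g \<Rightarrow> 'o \<Rightarrow> 'o) \<Rightarrow> ('g \<Rightarrow> 'm \<Rightarrow> 'm)
    \<Rightarrow> ('o, 'm) subcat \<Rightarrow> 'g \<Rightarrow> ('o, 'm) subcat" where
  "Csub C To Tm I g = sub_inter I (iso_closure C (sub_image (To g) (Tm g) I))"

end

theory Submission
  imports Defs
begin

section \<open>Category basics\<close>

lemma cat_dom: "is_category C \<Longrightarrow> f \<in> c_mor C \<Longrightarrow> c_dom C f \<in> c_obj C"
  unfolding is_category_def by blast
lemma cat_cod: "is_category C \<Longrightarrow> f \<in> c_mor C \<Longrightarrow> c_cod C f \<in> c_obj C"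
  unfolding is_category_def by blast
lemma cat_comp: "is_category C \<Longrightarrow> f \<in> c_mor C \<Longrightarrow> g \<in> c_mor C \<Longrightarrow> c_cod C f = c_dom C g \<Longrightarrow>
   c_comp C g f \<in> c_mor C \<and> c_dom C (c_comp C g f) = c_dom C f \<and> c_cod C (c_comp C g f) = c_cod C g"
  unfolding is_category_def by blast
lemma cat_idr: "is_category C \<Longrightarrow> f \<in> c_mor C \<Longrightarrow> c_comp C f (c_id C (c_dom C f)) = f"
  unfolding is_category_def by blast
lemma cat_idl: "is_category C \<Longrightarrow> f \<in> c_mor C \<Longrightarrow> c_comp C (c_id C (c_cod C f)) f = f"
  unfolding is_category_def by blast
lemma cat_assoc: "is_category C \<Longrightarrow> f \<in> c_mor C \<Longrightarrow> g \<in> c_mor C \<Longrightarrow> h \<in> c_mor C \<Longrightarrow>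
   c_cod C f = c_dom C g \<Longrightarrow> c_cod C g = c_dom C h \<Longrightarrow>
   c_comp C h (c_comp C g f) = c_comp C (c_comp C h g) f"
  unfolding is_category_def by blast

lemma mi_sym: "mutually_inverse C phi psi \<Longrightarrow> mutually_inverse C psi phi"
  unfolding mutually_inverse_def by auto

lemma iso_mor: "is_iso C phi \<Longrightarrow> phi \<in> c_mor C"
  unfolding is_iso_def mutually_inverse_def by blast

lemma iso_closedD: "iso_closed C K \<Longrightarrow> X \<in> fst K \<Longrightarrow> is_iso C phi \<Longrightarrow> c_dom C phi = X \<Longrightarrow>
   c_cod C phi \<in> fst K \<and> phi \<in> snd K"
  unfolding iso_closed_def by blast

lemma subD:
  assumes "is_subcategory C K"
  shows "f \<in> snd K \<Longrightarrow> c_dom C f \<in> fst K" "f \<in> snd K \<Longrightarrow> c_cod C f \<in> fst K"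
    "X \<in> fst K \<Longrightarrow> c_id C X \<in> snd K"
    "f \<in> snd K \<Longrightarrow> g \<in> snd K \<Longrightarrow> c_cod C f = c_dom C g \<Longrightarrow> c_comp C g f \<in> snd K"
    "fst K \<subseteq> c_obj C" "snd K \<subseteq> c_mor C"
  using assms unfolding is_subcategory_def by blast+

lemma iso_obj_bwd:
  assumes "iso_closed C K" "is_iso C phi" "c_cod C phi \<in> fst K"
  shows "c_dom C phi \<in> fst K"
proof -
  obtain psi where m: "mutually_inverse C phi psi" using assms(2) unfolding is_iso_def by blast
  hence "is_iso C psi" using mi_sym unfolding is_iso_def by metis
  moreover have "c_dom C psi = c_cod C phi" "c_cod C psi = c_dom C phi"
    using m unfolding mutually_inverse_def by auto
  ultimately show ?thesis using iso_closedD[OF assms(1) assms(3)] by metis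
qed

lemma square_fwd:
  assumes C: "is_category C" and K: "is_subcategory C K" "iso_closed C K"
    and isos: "is_iso C phi" "is_iso C psi" and ab: "a \<in> c_mor C" "b \<in> c_mor C"
    and dc: "c_dom C phi = c_dom C a" "c_cod C phi = c_dom C b"
      "c_dom C psi = c_cod C a" "c_cod C psi = c_cod C b"
    and sq: "c_comp C psi a = c_comp C b phi"
    and aK: "a \<in> snd K"
  shows "b \<in> snd K"
proof -
  obtain phi' where m: "mutually_inverse C phi phi'" using isos(1) unfolding is_iso_def by blast
  have phi'iso: "is_iso C phi'" using mi_sym[OF m] unfolding is_iso_def by blast
  have m': "phi' \<in> c_mor C" "c_dom C phi' = c_cod C phi" "c_cod C phi' = c_dom C phi"
    "c_comp C phi phi' = c_id C (c_cod C phi)"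
    using m unfolding mutually_inverse_def by auto
  have "c_dom C a \<in> fst K" using subD(1)[OF K(1) aK] .
  hence phiK: "phi \<in> snd K" "c_cod C phi \<in> fst K" using iso_closedD[OF K(2) _ isos(1)] dc by auto
  have phi'K: "phi' \<in> snd K" using iso_closedD[OF K(2) phiK(2) phi'iso] m' by auto
  have psiK: "psi \<in> snd K" using iso_closedD[OF K(2) subD(2)[OF K(1) aK] isos(2)] dc by auto
  have c1: "c_comp C psi a \<in> snd K" using subD(4)[OF K(1) aK psiK] dc by auto
  have "c_dom C (c_comp C psi a) = c_dom C a" using cat_comp[OF C ab(1) iso_mor[OF isos(2)]] dc by auto
  hence c2: "c_comp C (c_comp C psi a) phi' \<in> snd K" using subD(4)[OF K(1) phi'K c1] m' dc by auto
  have "c_comp C (c_comp C psi a) phi' = c_comp C (c_comp C b phi) phi'" using sq by simp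
  also have "\<dots> = c_comp C b (c_comp C phi phi')"
    using cat_assoc[OF C m'(1) iso_mor[OF isos(1)] ab(2)] m' dc by auto
  also have "\<dots> = b" using m' dc cat_idr[OF C ab(2)] by simp
  finally show ?thesis using c2 by simp
qed

lemma square_bwd:
  assumes C: "is_category C" and K: "is_subcategory C K" "iso_closed C K"
    and isos: "is_iso C phi" "is_iso C psi" and ab: "a \<in> c_mor C" "b \<in> c_mor C"
    and dc: "c_dom C phi = c_dom C a" "c_cod C phi = c_dom C b"
      "c_dom C psi = c_cod C a" "c_cod C psi = c_cod C b"
    and sq: "c_comp C psi a = c_comp C b phi"
    and bK: "b \<in> snd K"
  shows "a \<in> snd K"
proof -
  obtain psi' where m: "mutually_inverse C psi psi'" using isos(2) unfolding is_iso_def by blast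
  have psi'iso: "is_iso C psi'" using mi_sym[OF m] unfolding is_iso_def by blast
  have m': "psi' \<in> c_mor C" "c_dom C psi' = c_cod C psi" "c_cod C psi' = c_dom C psi"
    "c_comp C psi' psi = c_id C (c_dom C psi)"
    using m unfolding mutually_inverse_def by auto
  have "c_dom C phi \<in> fst K" using iso_obj_bwd[OF K(2) isos(1)] subD(1)[OF K(1) bK] dc by auto
  hence phiK: "phi \<in> snd K" using iso_closedD[OF K(2) _ isos(1)] by auto
  have psi'K: "psi' \<in> snd K" using iso_closedD[OF K(2) subD(2)[OF K(1) bK] psi'iso] m' dc by auto
  have c1: "c_comp C b phi \<in> snd K" using subD(4)[OF K(1) phiK bK] dc by auto
  have "c_cod C (c_comp C b phi) = c_cod C b" using cat_comp[OF C iso_mor[OF isos(1)] ab(2)] dc by auto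
  hence c2: "c_comp C psi' (c_comp C b phi) \<in> snd K" using subD(4)[OF K(1) c1 psi'K] m' dc by auto
  have "c_comp C psi' (c_comp C b phi) = c_comp C psi' (c_comp C psi a)" using sq by simp
  also have "\<dots> = c_comp C (c_comp C psi' psi) a"
    using cat_assoc[OF C ab(1) iso_mor[OF isos(2)] m'(1)] m' dc by auto
  also have "\<dots> = a" using m' dc cat_idl[OF C ab(1)] by simp
  finally show ?thesis using c2 by simp
qed

section \<open>Closure\<close>

lemma cl_least: "is_subcategory C S \<Longrightarrow> iso_closed C S \<Longrightarrow> sub_le D S \<Longrightarrow> sub_le (iso_closure C D) S"
proof -
  assume a: "is_subcategory C S" "iso_closed C S" "sub_le D S"
  let ?P = "\<lambda>S. is_subcategory C S \<and> iso_closed C S \<and> sub_le D S"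
  have "fst S \<in> {fst S' | S'. ?P S'}" "snd S \<in> {snd S' | S'. ?P S'}"
    by (rule CollectI, rule exI[of _ S], simp add: a)+
  hence "\<Inter>{fst S' | S'. ?P S'} \<subseteq> fst S" "\<Inter>{snd S' | S'. ?P S'} \<subseteq> snd S"
    by (auto intro: Inter_lower)
  thus ?thesis unfolding iso_closure_def sub_le_def by simp
qed

lemma cl_upper: "sub_le D (iso_closure C D)"
  unfolding iso_closure_def sub_le_def by auto

lemma cat_self_sub: "is_category C \<Longrightarrow> is_subcategory C (c_obj C, c_mor C)"
  unfolding is_subcategory_def is_category_def by auto

lemma cat_self_iso: "is_category C \<Longrightarrow> iso_closed C (c_obj C, c_mor C)"
  unfolding iso_closed_def is_iso_def mutually_inverse_def by (auto simp: cat_cod)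

lemma mem_cl_fst: "X \<in> fst (iso_closure C D) \<longleftrightarrow>
   (\<forall>S. is_subcategory C S \<and> iso_closed C S \<and> sub_le D S \<longrightarrow> X \<in> fst S)"
  unfolding iso_closure_def by auto
lemma mem_cl_snd: "f \<in> snd (iso_closure C D) \<longleftrightarrow>
   (\<forall>S. is_subcategory C S \<and> iso_closed C S \<and> sub_le D S \<longrightarrow> f \<in> snd S)"
  unfolding iso_closure_def by auto

lemma cl_props:
  assumes C: "is_category C" and D: "fst D \<subseteq> c_obj C" "snd D \<subseteq> c_mor C"
  shows "is_subcategory C (iso_closure C D) \<and> iso_closed C (iso_closure C D)"
proof -
  let ?P = "\<lambda>S. is_subcategory C S \<and> iso_closed C S \<and> sub_le D S"
  have self: "?P (c_obj C, c_mor C)" using cat_self_sub[OF C] cat_self_iso[OF C] D unfolding sub_le_def by auto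
  have a1: "fst (iso_closure C D) \<subseteq> c_obj C"
  proof
    fix X assume "X \<in> fst (iso_closure C D)"
    hence "X \<in> fst (c_obj C, c_mor C)" using self unfolding mem_cl_fst by (elim allE impE)
    thus "X \<in> c_obj C" by simp
  qed
  have a2: "snd (iso_closure C D) \<subseteq> c_mor C"
  proof
    fix X assume "X \<in> snd (iso_closure C D)"
    hence "X \<in> snd (c_obj C, c_mor C)" using self unfolding mem_cl_snd by (elim allE impE)
    thus "X \<in> c_mor C" by simp
  qed
  have a3: "c_dom C f \<in> fst (iso_closure C D) \<and> c_cod C f \<in> fst (iso_closure C D)"
    if "f \<in> snd (iso_closure C D)" for f
    using that unfolding mem_cl_fst mem_cl_snd by (meson subD(1) subD(2))
  have a4: "c_id C X \<in> snd (iso_closure C D)" if "X \<in> fst (iso_closure C D)" for X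
    using that unfolding mem_cl_fst mem_cl_snd by (meson subD(3))
  have a5: "c_comp C g f \<in> snd (iso_closure C D)"
    if "f \<in> snd (iso_closure C D)" "g \<in> snd (iso_closure C D)" "c_cod C f = c_dom C g" for f g
    using that unfolding mem_cl_snd by (meson subD(4))
  have s1: "is_subcategory C (iso_closure C D)"
    unfolding is_subcategory_def using a1 a2 a3 a4 a5 by simp
  have s2: "iso_closed C (iso_closure C D)"
    unfolding iso_closed_def
  proof (intro ballI allI impI)
    fix X phi assume X: "X \<in> fst (iso_closure C D)" and p: "is_iso C phi \<and> c_dom C phi = X"
    show "c_cod C phi \<in> fst (iso_closure C D) \<and> phi \<in> snd (iso_closure C D)"
      using X p unfolding mem_cl_fst mem_cl_snd by (meson iso_closedD)
  qed
  show ?thesis using s1 s2 by simp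
qed

lemma inter_props:
  assumes "is_subcategory C K1" "iso_closed C K1" "is_subcategory C K2" "iso_closed C K2"
  shows "is_subcategory C (sub_inter K1 K2) \<and> iso_closed C (sub_inter K1 K2)"
  using assms unfolding is_subcategory_def iso_closed_def sub_inter_def by auto

section \<open>Functors\<close>

lemma fun_obj: "is_endofunctor C Fo Fm \<Longrightarrow> X \<in> c_obj C \<Longrightarrow> Fo X \<in> c_obj C \<and> Fm (c_id C X) = c_id C (Fo X)"
  unfolding is_endofunctor_def by blast
lemma fun_mor: "is_endofunctor C Fo Fm \<Longrightarrow> f \<in> c_mor C \<Longrightarrow> Fm f \<in> c_mor C \<and>
   c_dom C (Fm f) = Fo (c_dom C f) \<and> c_cod C (Fm f) = Fo (c_cod C f)"
  unfolding is_endofunctor_def by blast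
lemma fun_comp: "is_endofunctor C Fo Fm \<Longrightarrow> f \<in> c_mor C \<Longrightarrow> g \<in> c_mor C \<Longrightarrow> c_cod C f = c_dom C g \<Longrightarrow>
   Fm (c_comp C g f) = c_comp C (Fm g) (Fm f)"
  unfolding is_endofunctor_def by blast

lemma fun_iso:
  assumes C: "is_category C" and F: "is_endofunctor C Fo Fm" and i: "is_iso C phi"
  shows "is_iso C (Fm phi)"
proof -
  obtain psi where m: "mutually_inverse C phi psi" using i unfolding is_iso_def by blast
  hence m': "phi \<in> c_mor C" "psi \<in> c_mor C" "c_dom C psi = c_cod C phi" "c_cod C psi = c_dom C phi"
     "c_comp C psi phi = c_id C (c_dom C phi)" "c_comp C phi psi = c_id C (c_cod C phi)"
    unfolding mutually_inverse_def by auto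
  have "mutually_inverse C (Fm phi) (Fm psi)"
    unfolding mutually_inverse_def
    using fun_mor[OF F m'(1)] fun_mor[OF F m'(2)] m'
      fun_comp[OF F m'(1) m'(2)] fun_comp[OF F m'(2) m'(1)]
      fun_obj[OF F cat_dom[OF C m'(1)]] fun_obj[OF F cat_cod[OF C m'(1)]]
    by auto
  thus ?thesis unfolding is_iso_def by blast
qed

lemma transport:
  assumes C: "is_category C" and F: "is_endofunctor C Fo Fm"
    and K: "is_subcategory C K" "iso_closed C K"
    and D: "fst D \<subseteq> c_obj C" "snd D \<subseteq> c_mor C"
    and hm: "\<And>f. f \<in> snd D \<Longrightarrow> Fm f \<in> snd K"
    and ho: "\<And>X. X \<in> fst D \<Longrightarrow> Fo X \<in> fst K"
  shows "(\<forall>X\<in>fst (iso_closure C D). Fo X \<in> fst K) \<and> (\<forall>f\<in>snd (iso_closure C D). Fm f \<in> snd K)"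
proof -
  define S where "S = ({X \<in> c_obj C. Fo X \<in> fst K}, {f \<in> c_mor C. Fm f \<in> snd K})"
  have "is_subcategory C S"
    unfolding is_subcategory_def S_def fst_conv snd_conv
  proof (intro conjI ballI impI)
    fix f assume f: "f \<in> {f \<in> c_mor C. Fm f \<in> snd K}"
    thus "c_dom C f \<in> {X \<in> c_obj C. Fo X \<in> fst K}" "c_cod C f \<in> {X \<in> c_obj C. Fo X \<in> fst K}"
      using cat_dom[OF C] cat_cod[OF C] fun_mor[OF F] subD(1,2)[OF K(1)] by auto metis+
  next
    fix X assume "X \<in> {X \<in> c_obj C. Fo X \<in> fst K}"
    thus "c_id C X \<in> {f \<in> c_mor C. Fm f \<in> snd K}"
      using C fun_obj[OF F] subD(3)[OF K(1)] unfolding is_category_def by auto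
  next
    fix f g assume f: "f \<in> {f \<in> c_mor C. Fm f \<in> snd K}" and g: "g \<in> {f \<in> c_mor C. Fm f \<in> snd K}"
      and e: "c_cod C f = c_dom C g"
    thus "c_comp C g f \<in> {f \<in> c_mor C. Fm f \<in> snd K}"
      using cat_comp[OF C] fun_comp[OF F] fun_mor[OF F] subD(4)[OF K(1)] by auto
  qed auto
  moreover have "iso_closed C S"
    unfolding iso_closed_def S_def fst_conv snd_conv
  proof (intro ballI allI impI)
    fix X phi assume X: "X \<in> {X \<in> c_obj C. Fo X \<in> fst K}" and p: "is_iso C phi \<and> c_dom C phi = X"
    have pm: "phi \<in> c_mor C" using p iso_mor by metis
    have fi: "is_iso C (Fm phi)" using fun_iso[OF C F] p by metis
    have "c_cod C (Fm phi) \<in> fst K \<and> Fm phi \<in> snd K"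
      using iso_closedD[OF K(2) _ fi] X p fun_mor[OF F pm] by auto
    thus "c_cod C phi \<in> {X \<in> c_obj C. Fo X \<in> fst K} \<and> phi \<in> {f \<in> c_mor C. Fm f \<in> snd K}"
      using pm cat_cod[OF C pm] fun_mor[OF F pm] by auto
  qed
  moreover have "sub_le D S" unfolding sub_le_def S_def using D hm ho by auto
  ultimately have "sub_le (iso_closure C D) S" by (rule cl_least)
  thus ?thesis unfolding sub_le_def S_def by auto
qed


section \<open>The group action setting\<close>

locale GA =
  fixes G :: "('g, 'b) monoid_scheme" and C :: "('o, 'm, 'z) scat_scheme"
    and To :: "'g \<Rightarrow> 'o \<Rightarrow> 'o" and Tm :: "'g \<Rightarrow> 'm \<Rightarrow> 'm"
    and TJ :: "'g \<Rightarrow> 'o \<Rightarrow> 'o \<Rightarrow> 'm"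
    and gam :: "'g \<Rightarrow> 'g \<Rightarrow> 'o \<Rightarrow> 'm" and u :: "'o \<Rightarrow> 'm"
    and I :: "('o, 'm) subcat"
  assumes grp: "group G"
    and sc: "semigroupal_category C"
    and ga: "group_action G C To Tm TJ gam u"
    and idl: "is_ideal C I"
begin

lemma C: "is_category C" using sc unfolding semigroupal_category_def by simp

lemma Isub: "is_subcategory C I" and Iiso: "iso_closed C I"
  using idl unfolding is_ideal_def by simp_all

lemma F: "g \<in> carrier G \<Longrightarrow> is_endofunctor C (To g) (Tm g)"
  using ga unfolding group_action_def semigroupal_autoequivalence_def semigroupal_functor_def
  by simp

lemma gam_ni: "g \<in> carrier G \<Longrightarrow> h \<in> carrier G \<Longrightarrow>
  semigroupal_nat_iso C (To g \<circ> To h) (Tm g \<circ> Tm h) (comp_J C (To h) (TJ h) (Tm g) (TJ g))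
          (To (g \<otimes>\<^bsub>G\<^esub> h)) (Tm (g \<otimes>\<^bsub>G\<^esub> h)) (TJ (g \<otimes>\<^bsub>G\<^esub> h)) (gam g h)"
  using ga unfolding group_action_def by simp

lemma gam: "g \<in> carrier G \<Longrightarrow> h \<in> carrier G \<Longrightarrow> X \<in> c_obj C \<Longrightarrow>
  is_iso C (gam g h X) \<and> c_dom C (gam g h X) = To g (To h X) \<and> c_cod C (gam g h X) = To (g \<otimes>\<^bsub>G\<^esub> h) X"
  using gam_ni unfolding semigroupal_nat_iso_def by simp

lemma gam_nat: "g \<in> carrier G \<Longrightarrow> h \<in> carrier G \<Longrightarrow> f \<in> c_mor C \<Longrightarrow>
  c_comp C (gam g h (c_cod C f)) (Tm g (Tm h f)) = c_comp C (Tm (g \<otimes>\<^bsub>G\<^esub> h) f) (gam g h (c_dom C f))"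
  using gam_ni unfolding semigroupal_nat_iso_def by simp

lemma u_ni: "semigroupal_nat_iso C id id (id_J C) (To \<one>\<^bsub>G\<^esub>) (Tm \<one>\<^bsub>G\<^esub>) (TJ \<one>\<^bsub>G\<^esub>) u"
  using ga unfolding group_action_def by simp

lemma u: "X \<in> c_obj C \<Longrightarrow> is_iso C (u X) \<and> c_dom C (u X) = X \<and> c_cod C (u X) = To \<one>\<^bsub>G\<^esub> X"
  using u_ni unfolding semigroupal_nat_iso_def by simp

lemma u_nat: "f \<in> c_mor C \<Longrightarrow> c_comp C (u (c_cod C f)) f = c_comp C (Tm \<one>\<^bsub>G\<^esub> f) (u (c_dom C f))"
  using u_ni unfolding semigroupal_nat_iso_def by simp

lemma one_c: "\<one>\<^bsub>G\<^esub> \<in> carrier G" using grp by (simp add: group.is_monoid monoid.one_closed)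

lemma twist_mor:
  assumes g: "g \<in> carrier G" and h: "h \<in> carrier G" and K: "is_subcategory C K" "iso_closed C K"
    and a: "a \<in> c_mor C"
  shows "Tm g (Tm h a) \<in> snd K \<longleftrightarrow> Tm (g \<otimes>\<^bsub>G\<^esub> h) a \<in> snd K"
proof -
  have ha: "Tm h a \<in> c_mor C" "c_dom C (Tm h a) = To h (c_dom C a)" "c_cod C (Tm h a) = To h (c_cod C a)"
    using fun_mor[OF F[OF h] a] by auto
  have gha: "Tm g (Tm h a) \<in> c_mor C" "c_dom C (Tm g (Tm h a)) = To g (To h (c_dom C a))"
     "c_cod C (Tm g (Tm h a)) = To g (To h (c_cod C a))"
    using fun_mor[OF F[OF g] ha(1)] ha by auto
  have gh: "g \<otimes>\<^bsub>G\<^esub> h \<in> carrier G" using grp g h by (simp add: group.is_monoid monoid.m_closed)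
  have b: "Tm (g \<otimes>\<^bsub>G\<^esub> h) a \<in> c_mor C" "c_dom C (Tm (g \<otimes>\<^bsub>G\<^esub> h) a) = To (g \<otimes>\<^bsub>G\<^esub> h) (c_dom C a)"
     "c_cod C (Tm (g \<otimes>\<^bsub>G\<^esub> h) a) = To (g \<otimes>\<^bsub>G\<^esub> h) (c_cod C a)"
    using fun_mor[OF F[OF gh] a] by auto
  have d: "c_dom C a \<in> c_obj C" "c_cod C a \<in> c_obj C" using cat_dom[OF C a] cat_cod[OF C a] by auto
  note g1 = gam[OF g h d(1)] and g2 = gam[OF g h d(2)]
  show ?thesis
  proof
    assume "Tm g (Tm h a) \<in> snd K"
    thus "Tm (g \<otimes>\<^bsub>G\<^esub> h) a \<in> snd K"
      using square_fwd[OF C K _ _ gha(1) b(1) _ _ _ _ gam_nat[OF g h a]] g1 g2 gha b by simp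
  next
    assume "Tm (g \<otimes>\<^bsub>G\<^esub> h) a \<in> snd K"
    thus "Tm g (Tm h a) \<in> snd K"
      using square_bwd[OF C K _ _ gha(1) b(1) _ _ _ _ gam_nat[OF g h a]] g1 g2 gha b by simp
  qed
qed

lemma twist_obj:
  assumes g: "g \<in> carrier G" and h: "h \<in> carrier G" and K: "iso_closed C K"
    and X: "X \<in> c_obj C"
  shows "To g (To h X) \<in> fst K \<longleftrightarrow> To (g \<otimes>\<^bsub>G\<^esub> h) X \<in> fst K"
  using gam[OF g h X] iso_closedD[OF K] iso_obj_bwd[OF K] by metis

lemma u_mor:
  assumes K: "is_subcategory C K" "iso_closed C K" and a: "a \<in> c_mor C"
  shows "a \<in> snd K \<longleftrightarrow> Tm \<one>\<^bsub>G\<^esub> a \<in> snd K"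
proof -
  have b: "Tm \<one>\<^bsub>G\<^esub> a \<in> c_mor C" "c_dom C (Tm \<one>\<^bsub>G\<^esub> a) = To \<one>\<^bsub>G\<^esub> (c_dom C a)"
     "c_cod C (Tm \<one>\<^bsub>G\<^esub> a) = To \<one>\<^bsub>G\<^esub> (c_cod C a)"
    using fun_mor[OF F[OF one_c] a] by auto
  have d: "c_dom C a \<in> c_obj C" "c_cod C a \<in> c_obj C" using cat_dom[OF C a] cat_cod[OF C a] by auto
  note g1 = u[OF d(1)] and g2 = u[OF d(2)]
  show ?thesis
  proof
    assume "a \<in> snd K"
    thus "Tm \<one>\<^bsub>G\<^esub> a \<in> snd K"
      using square_fwd[OF C K _ _ a b(1) _ _ _ _ u_nat[OF a]] g1 g2 b by simp
  next
    assume "Tm \<one>\<^bsub>G\<^esub> a \<in> snd K"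
    thus "a \<in> snd K"
      using square_bwd[OF C K _ _ a b(1) _ _ _ _ u_nat[OF a]] g1 g2 b by simp
  qed
qed

lemma u_obj:
  assumes K: "iso_closed C K" and X: "X \<in> c_obj C"
  shows "X \<in> fst K \<longleftrightarrow> To \<one>\<^bsub>G\<^esub> X \<in> fst K"
  using u[OF X] iso_closedD[OF K] iso_obj_bwd[OF K] by metis

lemma inv_c: "g \<in> carrier G \<Longrightarrow> inv\<^bsub>G\<^esub> g \<in> carrier G" using grp by (simp add: group.inv_closed)
lemma r_inv': "g \<in> carrier G \<Longrightarrow> g \<otimes>\<^bsub>G\<^esub> inv\<^bsub>G\<^esub> g = \<one>\<^bsub>G\<^esub>" using grp by (simp add: group.r_inv)

lemma back_mor:
  assumes g: "g \<in> carrier G" and K: "is_subcategory C K" "iso_closed C K" and a: "a \<in> c_mor C"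
  shows "Tm g (Tm (inv\<^bsub>G\<^esub> g) a) \<in> snd K \<longleftrightarrow> a \<in> snd K"
  using twist_mor[OF g inv_c[OF g] K a] u_mor[OF K a] r_inv'[OF g] by simp

lemma back_obj:
  assumes g: "g \<in> carrier G" and K: "iso_closed C K" and X: "X \<in> c_obj C"
  shows "To g (To (inv\<^bsub>G\<^esub> g) X) \<in> fst K \<longleftrightarrow> X \<in> fst K"
  using twist_obj[OF g inv_c[OF g] K X] u_obj[OF K X] r_inv'[OF g] by simp

lemma img_sub:
  assumes g: "g \<in> carrier G" and D: "fst D \<subseteq> c_obj C" "snd D \<subseteq> c_mor C"
  shows "fst (sub_image (To g) (Tm g) D) \<subseteq> c_obj C" "snd (sub_image (To g) (Tm g) D) \<subseteq> c_mor C"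
  using D fun_obj[OF F[OF g]] fun_mor[OF F[OF g]] unfolding sub_image_def by auto

lemma I_sub: "fst I \<subseteq> c_obj C" "snd I \<subseteq> c_mor C" using subD(5,6)[OF Isub] by auto

lemma clI_props: "g \<in> carrier G \<Longrightarrow>
  is_subcategory C (iso_closure C (sub_image (To g) (Tm g) I)) \<and>
  iso_closed C (iso_closure C (sub_image (To g) (Tm g) I))"
  using cl_props[OF C img_sub[OF _ I_sub]] by simp

lemma Cs_props: "g \<in> carrier G \<Longrightarrow>
  is_subcategory C (Csub C To Tm I g) \<and> iso_closed C (Csub C To Tm I g)"
  unfolding Csub_def using inter_props[OF Isub Iiso] clI_props by simp

lemma Cs_sub: "fst (Csub C To Tm I g) \<subseteq> fst I" "snd (Csub C To Tm I g) \<subseteq> snd I"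
  unfolding Csub_def sub_inter_def by auto

lemma part1: "Csub C To Tm I \<one>\<^bsub>G\<^esub> = I"
proof -
  let ?K = "iso_closure C (sub_image (To \<one>\<^bsub>G\<^esub>) (Tm \<one>\<^bsub>G\<^esub>) I)"
  have K: "is_subcategory C ?K" "iso_closed C ?K" using clI_props[OF one_c] by auto
  have up: "sub_le (sub_image (To \<one>\<^bsub>G\<^esub>) (Tm \<one>\<^bsub>G\<^esub>) I) ?K" by (rule cl_upper)
  have o: "fst I \<subseteq> fst ?K"
  proof
    fix X assume X: "X \<in> fst I"
    hence "To \<one>\<^bsub>G\<^esub> X \<in> fst ?K" using up unfolding sub_le_def sub_image_def by auto
    thus "X \<in> fst ?K" using u_obj[OF K(2)] X I_sub by auto
  qed
  have m: "snd I \<subseteq> snd ?K"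
  proof
    fix a assume a: "a \<in> snd I"
    hence "Tm \<one>\<^bsub>G\<^esub> a \<in> snd ?K" using up unfolding sub_le_def sub_image_def by auto
    thus "a \<in> snd ?K" using u_mor[OF K] a I_sub by auto
  qed
  show ?thesis unfolding Csub_def sub_inter_def using o m by (simp add: prod_eq_iff Int_absorb2)
qed

lemma trans2:
  assumes g: "g \<in> carrier G" and k: "k \<in> carrier G" and K: "is_subcategory C K" "iso_closed C K"
    and hm: "\<And>a. a \<in> snd I \<Longrightarrow> Tm (g \<otimes>\<^bsub>G\<^esub> k) a \<in> snd K"
    and ho: "\<And>X. X \<in> fst I \<Longrightarrow> To (g \<otimes>\<^bsub>G\<^esub> k) X \<in> fst K"
  shows "(\<forall>X\<in>fst (iso_closure C (sub_image (To k) (Tm k) I)). To g X \<in> fst K) \<and>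
         (\<forall>f\<in>snd (iso_closure C (sub_image (To k) (Tm k) I)). Tm g f \<in> snd K)"
proof (rule transport[OF C F[OF g] K img_sub[OF k I_sub]])
  fix f assume "f \<in> snd (sub_image (To k) (Tm k) I)"
  then obtain a where a: "a \<in> snd I" "f = Tm k a" unfolding sub_image_def by auto
  show "Tm g f \<in> snd K" using twist_mor[OF g k K] a hm I_sub by auto
next
  fix X assume "X \<in> fst (sub_image (To k) (Tm k) I)"
  then obtain Y where a: "Y \<in> fst I" "X = To k Y" unfolding sub_image_def by auto
  show "To g X \<in> fst K" using twist_obj[OF g k K(2)] a ho I_sub by auto
qed

lemma part2:
  assumes g: "g \<in> carrier G" and h: "h \<in> carrier G"
  shows "sub_le (sub_image (To g) (Tm g)
                 (sub_inter (Csub C To Tm I (inv\<^bsub>G\<^esub> g)) (Csub C To Tm I h)))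
              (sub_inter (Csub C To Tm I g) (Csub C To Tm I (g \<otimes>\<^bsub>G\<^esub> h)))"
proof -
  have gh: "g \<otimes>\<^bsub>G\<^esub> h \<in> carrier G" using grp g h by (simp add: group.is_monoid monoid.m_closed)
  let ?Kg = "iso_closure C (sub_image (To g) (Tm g) I)"
  let ?Kgh = "iso_closure C (sub_image (To (g \<otimes>\<^bsub>G\<^esub> h)) (Tm (g \<otimes>\<^bsub>G\<^esub> h)) I)"
  have Kgh: "is_subcategory C ?Kgh" "iso_closed C ?Kgh" using clI_props[OF gh] by auto
  have upg: "sub_le (sub_image (To g) (Tm g) I) ?Kg" by (rule cl_upper)
  have upgh: "sub_le (sub_image (To (g \<otimes>\<^bsub>G\<^esub> h)) (Tm (g \<otimes>\<^bsub>G\<^esub> h)) I) ?Kgh" by (rule cl_upper)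
  have T1: "(\<forall>X\<in>fst (iso_closure C (sub_image (To (inv\<^bsub>G\<^esub> g)) (Tm (inv\<^bsub>G\<^esub> g)) I)). To g X \<in> fst I) \<and>
         (\<forall>f\<in>snd (iso_closure C (sub_image (To (inv\<^bsub>G\<^esub> g)) (Tm (inv\<^bsub>G\<^esub> g)) I)). Tm g f \<in> snd I)"
  proof (rule trans2[OF g inv_c[OF g] Isub Iiso])
    fix a assume "a \<in> snd I" thus "Tm (g \<otimes>\<^bsub>G\<^esub> inv\<^bsub>G\<^esub> g) a \<in> snd I"
      using u_mor[OF Isub Iiso] r_inv'[OF g] I_sub by auto
  next
    fix X assume "X \<in> fst I" thus "To (g \<otimes>\<^bsub>G\<^esub> inv\<^bsub>G\<^esub> g) X \<in> fst I"
      using u_obj[OF Iiso] r_inv'[OF g] I_sub by auto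
  qed
  have T2: "(\<forall>X\<in>fst (iso_closure C (sub_image (To h) (Tm h) I)). To g X \<in> fst ?Kgh) \<and>
         (\<forall>f\<in>snd (iso_closure C (sub_image (To h) (Tm h) I)). Tm g f \<in> snd ?Kgh)"
  proof (rule trans2[OF g h Kgh])
    fix a assume "a \<in> snd I" thus "Tm (g \<otimes>\<^bsub>G\<^esub> h) a \<in> snd ?Kgh"
      using upgh unfolding sub_le_def sub_image_def by auto
  next
    fix X assume "X \<in> fst I" thus "To (g \<otimes>\<^bsub>G\<^esub> h) X \<in> fst ?Kgh"
      using upgh unfolding sub_le_def sub_image_def by auto
  qed
  have T3: "\<And>X. X \<in> fst I \<Longrightarrow> To g X \<in> fst ?Kg" "\<And>f. f \<in> snd I \<Longrightarrow> Tm g f \<in> snd ?Kg"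
    using upg unfolding sub_le_def sub_image_def by auto
  show ?thesis
    using T1 T2 T3
    unfolding sub_le_def sub_image_def sub_inter_def Csub_def fst_conv snd_conv by auto
qed

lemma part3:
  assumes g: "g \<in> carrier G" and h: "h \<in> carrier G"
  shows "iso_closure C (sub_image (To g) (Tm g)
                 (sub_inter (Csub C To Tm I (inv\<^bsub>G\<^esub> g)) (Csub C To Tm I h)))
         = sub_inter (Csub C To Tm I g) (Csub C To Tm I (g \<otimes>\<^bsub>G\<^esub> h))"
proof -
  have gh: "g \<otimes>\<^bsub>G\<^esub> h \<in> carrier G" using grp g h by (simp add: group.is_monoid monoid.m_closed)
  have ig: "inv\<^bsub>G\<^esub> g \<in> carrier G" by (rule inv_c[OF g])
  let ?E = "sub_inter (Csub C To Tm I (inv\<^bsub>G\<^esub> g)) (Csub C To Tm I h)"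
  let ?R = "sub_inter (Csub C To Tm I g) (Csub C To Tm I (g \<otimes>\<^bsub>G\<^esub> h))"
  let ?L = "iso_closure C (sub_image (To g) (Tm g) ?E)"
  have R: "is_subcategory C ?R" "iso_closed C ?R"
    using inter_props[of C "Csub C To Tm I g" "Csub C To Tm I (g \<otimes>\<^bsub>G\<^esub> h)"]
      Cs_props[OF g] Cs_props[OF gh] by simp_all
  have Esub: "fst ?E \<subseteq> c_obj C" "snd ?E \<subseteq> c_mor C"
    using Cs_sub[of h] I_sub unfolding sub_inter_def by auto
  have L: "is_subcategory C ?L" "iso_closed C ?L"
    using cl_props[OF C img_sub[OF g Esub]] by auto
  have le1: "sub_le ?L ?R" by (rule cl_least[OF R part2[OF g h]])
  have p2: "sub_le (sub_image (To (inv\<^bsub>G\<^esub> g)) (Tm (inv\<^bsub>G\<^esub> g))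
                 (sub_inter (Csub C To Tm I (inv\<^bsub>G\<^esub> (inv\<^bsub>G\<^esub> g))) (Csub C To Tm I (g \<otimes>\<^bsub>G\<^esub> h))))
              (sub_inter (Csub C To Tm I (inv\<^bsub>G\<^esub> g)) (Csub C To Tm I (inv\<^bsub>G\<^esub> g \<otimes>\<^bsub>G\<^esub> (g \<otimes>\<^bsub>G\<^esub> h))))"
    by (rule part2[OF ig gh])
  have e1: "inv\<^bsub>G\<^esub> (inv\<^bsub>G\<^esub> g) = g" using grp g by (simp add: group.inv_inv)
  have e2: "inv\<^bsub>G\<^esub> g \<otimes>\<^bsub>G\<^esub> (g \<otimes>\<^bsub>G\<^esub> h) = h"
    using grp g h ig by (metis group.l_inv group.is_monoid monoid.l_one monoid.m_assoc)
  have p2': "sub_le (sub_image (To (inv\<^bsub>G\<^esub> g)) (Tm (inv\<^bsub>G\<^esub> g)) ?R) ?E"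
    using p2 unfolding e1 e2 .
  have up: "sub_le (sub_image (To g) (Tm g) ?E) ?L" by (rule cl_upper)
  have Rsub: "fst ?R \<subseteq> c_obj C" "snd ?R \<subseteq> c_mor C"
    using Cs_sub[of g] I_sub unfolding sub_inter_def by auto
  have o: "fst ?R \<subseteq> fst ?L"
  proof
    fix X assume X: "X \<in> fst ?R"
    hence "To (inv\<^bsub>G\<^esub> g) X \<in> fst ?E" using p2' unfolding sub_le_def sub_image_def by auto
    hence "To g (To (inv\<^bsub>G\<^esub> g) X) \<in> fst ?L" using up unfolding sub_le_def sub_image_def by auto
    thus "X \<in> fst ?L" using back_obj[OF g L(2)] X Rsub by auto
  qed
  have m: "snd ?R \<subseteq> snd ?L"
  proof
    fix a assume a: "a \<in> snd ?R"
    hence "Tm (inv\<^bsub>G\<^esub> g) a \<in> snd ?E" using p2' unfolding sub_le_def sub_image_def by auto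
    hence "Tm g (Tm (inv\<^bsub>G\<^esub> g) a) \<in> snd ?L" using up unfolding sub_le_def sub_image_def by auto
    thus "a \<in> snd ?L" using back_mor[OF g L] a Rsub by auto
  qed
  show ?thesis using le1 o m unfolding sub_le_def by (simp add: prod_eq_iff)
qed

end

theorem lemma3p1:
  fixes G :: "('g, 'b) monoid_scheme"
    and C :: "('o, 'm, 'z) scat_scheme"
    and To :: "'g \<Rightarrow> 'o \<Rightarrow> 'o" and Tm :: "'g \<Rightarrow> 'm \<Rightarrow> 'm"
    and TJ :: "'g \<Rightarrow> 'o \<Rightarrow> 'o \<Rightarrow> 'm"
    and gam :: "'g \<Rightarrow> 'g \<Rightarrow> 'o \<Rightarrow> 'm" and u :: "'o \<Rightarrow> 'm"
    and I :: "('o, 'm) subcat"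
  assumes "group G"
    and "semigroupal_category C"
    and "group_action G C To Tm TJ gam u"
    and "is_ideal C I"
  shows "Csub C To Tm I \<one>\<^bsub>G\<^esub> = I \<and>
    (\<forall>g \<in> carrier G. \<forall>h \<in> carrier G.
       sub_le (sub_image (To g) (Tm g)
                 (sub_inter (Csub C To Tm I (inv\<^bsub>G\<^esub> g)) (Csub C To Tm I h)))
              (sub_inter (Csub C To Tm I g) (Csub C To Tm I (g \<otimes>\<^bsub>G\<^esub> h)))) \<and>
    (\<forall>g \<in> carrier G. \<forall>h \<in> carrier G.
       iso_closure C (sub_image (To g) (Tm g)
                 (sub_inter (Csub C To Tm I (inv\<^bsub>G\<^esub> g)) (Csub C To Tm I h)))
         = sub_inter (Csub C To Tm I g) (Csub C To Tm I (g \<otimes>\<^bsub>G\<^esub> h)))"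
proof -
  interpret GA G C To Tm TJ gam u I by (rule GA.intro) (rule assms)+
  show ?thesis using part1 part2 part3 by blast
qed

end
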